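(* Let $\{A_kB_kC_k\}_{k\ge 0}$ be a chain of Miquel triangles with fixed Miquel point $P$, all nondegenerate, none right-angled, and with $P$ on none of their side lines. If $P$ is the circumcenter of $A_kB_kC_k$, then $P$ is the orthocenter of $A_{k+1}B_{k+1}C_{k+1}$; if $P$ is the orthocenter of $A_kB_kC_k$, then $P$ is the incenter or an excenter of $A_{k+1}B_{k+1}C_{k+1}$; and if $P$ is the incenter or an excenter of $A_kB_kC_k$, then $P$ is the circumcenter of $A_{k+1}B_{k+1}C_{k+1}$. Consequently, if $P$ is the circumcenter of $A_0B_0C_0$, then for every $m\ge 0$, $P$ is the circumcenter of $A_{3m}B_{3m}C_{3m}$, the orthocenter of $A_{3m+1}B_{3m+1}C_{3m+1}$, and the incenter or an excenter of $A_{3m+2}B_{3m+2}C_{3m+2}$.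
   Context: Miquel triangle: given a triangle $ABC$ and a point $P$ not on the lines $BC,CA,AB$, a triangle $XYZ$ with $X$ on line $BC$, $Y$ on line $CA$, $Z$ on line $AB$ is a Miquel triangle of $P$ relative to $ABC$ if $P$ lies on the circles through $A,Y,Z$, through $B,Z,X$, and through $C,X,Y$. Chain: for each $k\ge 0$, $A_{k+1}\in$ line $B_kC_k$, $B_{k+1}\in$ line $C_kA_k$, $C_{k+1}\in$ line $A_kB_k$, and $A_{k+1}B_{k+1}C_{k+1}$ is a Miquel triangle of $P$ relative to $A_kB_kC_k$. *)

theory Defs
  imports "HOL-Analysis.Analysis"
begin

type_synonym point = "real^2"

definition line :: "point \<Rightarrow> point \<Rightarrow> point set" where
  "line A B = {X. collinear {A, B, X}}"

definition on_circle_through :: "point \<Rightarrow> point \<Rightarrow> point \<Rightarrow> point \<Rightarrow> bool" where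
  "on_circle_through P U V W \<longleftrightarrow> \<not> collinear {U, V, W} \<and>
     (\<exists>c. dist c U = dist c V \<and> dist c U = dist c W \<and> dist c U = dist c P)"

definition miquel_triangle ::
  "point \<Rightarrow> point \<Rightarrow> point \<Rightarrow> point \<Rightarrow> point \<Rightarrow> point \<Rightarrow> point \<Rightarrow> bool" where
  "miquel_triangle P A B C X Y Z \<longleftrightarrow>
     P \<notin> line B C \<and> P \<notin> line C A \<and> P \<notin> line A B \<and>
     X \<in> line B C \<and> Y \<in> line C A \<and> Z \<in> line A B \<and>
     on_circle_through P A Y Z \<and> on_circle_through P B Z X \<and> on_circle_through P C X Y"

definition nondegenerate :: "point \<Rightarrow> point \<Rightarrow> point \<Rightarrow> bool" where
  "nondegenerate A B C \<longleftrightarrow> \<not> collinear {A, B, C}"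

definition right_angled :: "point \<Rightarrow> point \<Rightarrow> point \<Rightarrow> bool" where
  "right_angled A B C \<longleftrightarrow>
     orthogonal (B - A) (C - A) \<or> orthogonal (A - B) (C - B) \<or> orthogonal (A - C) (B - C)"

definition circumcenter :: "point \<Rightarrow> point \<Rightarrow> point \<Rightarrow> point \<Rightarrow> bool" where
  "circumcenter P A B C \<longleftrightarrow> dist P A = dist P B \<and> dist P A = dist P C"

definition orthocenter :: "point \<Rightarrow> point \<Rightarrow> point \<Rightarrow> point \<Rightarrow> bool" where
  "orthocenter P A B C \<longleftrightarrow>
     orthogonal (P - A) (C - B) \<and> orthogonal (P - B) (A - C) \<and> orthogonal (P - C) (B - A)"

text \<open>P is the centre of a circle tangent to all three side lines (incircle or an excircle).\<close>
definition in_or_excenter :: "point \<Rightarrow> point \<Rightarrow> point \<Rightarrow> point \<Rightarrow> bool" where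
  "in_or_excenter P A B C \<longleftrightarrow> (\<exists>r>0.
     infdist P (line B C) = r \<and> infdist P (line C A) = r \<and> infdist P (line A B) = r)"

end

theory Submission
  imports Defs
begin
definition cr :: "real^2 \<Rightarrow> real^2 \<Rightarrow> real" where "cr u v = u$1 * v$2 - u$2 * v$1"
definition rot :: "real^2 \<Rightarrow> real^2" where "rot v = (\<chi> i. if i = 1 then - v$2 else v$1)"
lemma rot_c[simp]: "rot v $ 1 = - v$2" "rot v $ 2 = v$1" by (auto simp: rot_def)
lemma inner2: "inner (u::real^2) v = u$1 * v$1 + u$2 * v$2" by (simp add: inner_vec_def sum_2)
lemma eq2: "((u::real^2) = v) \<longleftrightarrow> u$1 = v$1 \<and> u$2 = v$2" by (simp add: vec_eq_iff forall_2)
lemma norm2: "norm (u::real^2) ^2 = u$1^2 + u$2^2" unfolding power2_norm_eq_inner inner2 by (simp add: power2_eq_square)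

lemma par2: "((u::real^2) = 0 \<or> v = 0 \<or> (\<exists>c. v = c *\<^sub>R u)) \<longleftrightarrow> cr u v = 0"
proof
  assume "u = 0 \<or> v = 0 \<or> (\<exists>c. v = c *\<^sub>R u)"
  then show "cr u v = 0" by (auto simp: cr_def)
next
  assume h: "cr u v = 0"
  show "u = 0 \<or> v = 0 \<or> (\<exists>c. v = c *\<^sub>R u)"
  proof (cases "u$1 = 0")
    case True
    show ?thesis
    proof (cases "u$2 = 0")
      case True then show ?thesis using \<open>u$1=0\<close> by (simp add: eq2)
    next
      case False
      have "v = (v$2/u$2) *\<^sub>R u" using h True False by (simp add: eq2 cr_def field_simps)
      then show ?thesis by blast
    qed
  next
    case False
    have "v = (v$1/u$1) *\<^sub>R u" using h False by (simp add: eq2 cr_def field_simps)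
    then show ?thesis by blast
  qed
qed

lemma coll2: "collinear {A, B, X::real^2} \<longleftrightarrow> cr (B - A) (X - A) = 0"
proof -
  have "collinear {A, B, X} = collinear {B, A, X}" by (simp add: insert_commute)
  also have "\<dots> = collinear {0, B - A, X - A}" by (rule collinear_3) simp
  also have "\<dots> = (cr (B - A) (X - A) = 0)" using par2[of "B - A" "X - A"] by (simp add: collinear_lemma)
  finally show ?thesis .
qed

lemma lagr: "norm (w::real^2) ^2 * norm d ^2 = (inner w d)^2 + (cr d w)^2"
  unfolding norm2 inner2 cr_def by algebra

lemma infdist_line:
  assumes "B \<noteq> (C::real^2)"
  shows "infdist P (line B C) = \<bar>cr (C - B) (P - B)\<bar> / norm (C - B)"
proof -
  define d where "d = C - B"
  have dn: "norm d > 0" using assms by (simp add: d_def)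
  define h where "h = \<bar>cr d (P - B)\<bar> / norm d"
  define f where "f = B + (inner (P - B) d / inner d d) *\<^sub>R d"
  have fin: "f \<in> line B C" unfolding line_def coll2 f_def d_def[symmetric] by (simp add: cr_def)
  have "inner (P - f) d = 0" using dn unfolding f_def
    by (simp add: inner_diff_left inner_add_left)
  with lagr[of "P - f" d] have "norm (P - f) ^2 * norm d ^2 = (cr d (P - f))^2" by simp
  also have "cr d (P - f) = cr d (P - B)" unfolding f_def by (simp add: cr_def) algebra
  finally have "(norm (P - f) * norm d)^2 = (cr d (P - B))^2" by (simp add: power_mult_distrib)
  hence "norm (P - f) * norm d = \<bar>cr d (P - B)\<bar>"
    by (metis abs_of_nonneg norm_ge_zero real_sqrt_abs zero_le_mult_iff)
  hence dpf: "dist P f = h" using dn unfolding h_def dist_norm by (simp add: field_simps)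
  have low: "h \<le> dist P X" if "X \<in> line B C" for X
  proof -
    have "cr d (X - B) = 0" using that unfolding line_def coll2 d_def by simp
    hence "cr d (P - X) = cr d (P - B)" by (simp add: cr_def algebra_simps)
    with lagr[of "P - X" d] have "(cr d (P - B))^2 \<le> (norm (P - X) * norm d)^2"
      by (simp add: power_mult_distrib)
    hence "\<bar>cr d (P - B)\<bar> \<le> \<bar>norm (P - X) * norm d\<bar>" using abs_le_square_iff by blast
    hence "\<bar>cr d (P - B)\<bar> \<le> norm (P - X) * norm d" by simp
    thus ?thesis using dn unfolding h_def dist_norm by (simp add: field_simps)
  qed
  have "infdist P (line B C) \<le> h" using infdist_le[OF fin, of P] dpf by simp
  moreover have "h \<le> infdist P (line B C)"
    unfolding infdist_notempty[OF ex_in_conv[THEN iffD1, OF exI, OF fin]]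
    by (rule cINF_greatest) (use fin low in auto)
  ultimately show ?thesis unfolding h_def d_def by simp
qed
lemma indep0: assumes "cr p d \<noteq> 0" "inner v p = 0" "inner v d = 0" shows "v = 0"
proof -
  have "v$1 * cr p d = 0" "v$2 * cr p d = 0" using assms(2,3) unfolding inner2 cr_def by algebra+
  thus ?thesis using assms(1) by (simp add: eq2)
qed

lemma circ:
  assumes h1: "2 * inner ce p = inner p p" and h2: "2 * inner ce y = inner y y"
    and h3: "cr d (y - p) = 0" and h4: "y \<noteq> p" and h5: "cr p d \<noteq> 0"
  shows "2 *\<^sub>R ce = p + (inner y d / cr p d) *\<^sub>R rot p"
proof -
  have "d \<noteq> 0" using h5 by (auto simp: cr_def)
  then obtain t where t: "y - p = t *\<^sub>R d" using par2[of d "y - p"] h3 h4 by auto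
  hence tn: "t \<noteq> 0" using h4 by auto
  have y: "y = p + t *\<^sub>R d" using t by (simp add: algebra_simps)
  have "t * (2 * inner ce d) = t * (2 * inner p d + t * inner d d)"
    using h1 h2 unfolding y by (simp add: inner_add_right inner_add_left algebra_simps inner_commute)
  hence e2: "2 * inner ce d = 2 * inner p d + t * inner d d" using tn by simp
  have "2 *\<^sub>R ce - (p + (inner y d / cr p d) *\<^sub>R rot p) = 0"
  proof (rule indep0[OF h5])
    show "inner (2 *\<^sub>R ce - (p + (inner y d / cr p d) *\<^sub>R rot p)) p = 0"
      using h1 by (simp add: inner_diff_left inner_add_left inner2 algebra_simps add_divide_distrib diff_divide_distrib)
    show "inner (2 *\<^sub>R ce - (p + (inner y d / cr p d) *\<^sub>R rot p)) d = 0"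
      using e2 h5 unfolding y by (simp add: inner_diff_left inner_add_left inner2 cr_def field_simps) algebra
  qed
  thus ?thesis by simp
qed
lemma scal_eq: assumes "p + s *\<^sub>R rot p = p + t *\<^sub>R rot (p::real^2)" "p \<noteq> 0" shows "s = t"
proof -
  have "(s - t) * p$1 = 0" "(s - t) * p$2 = 0" using assms(1) by (auto simp: eq2 algebra_simps)
  thus ?thesis using assms(2) by (auto simp: eq2)
qed

lemma crsimps: "cr a (a - c) = cr c a" "cr a (b - a) = cr a b" "cr b (b - a) = cr a b"
  "cr b (c - b) = cr b c" "cr c (c - b) = cr b c" "cr c (a - c) = cr c a"
  by (simp_all add: cr_def algebra_simps)

lemma cr0: "cr a b \<noteq> 0 \<Longrightarrow> a \<noteq> 0" "cr a b \<noteq> 0 \<Longrightarrow> b \<noteq> 0" by (auto simp: cr_def)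

lemma online_shift: "cr (u - v) (w - v) = 0 \<Longrightarrow> cr (u - v) (w - u) = 0"
  "cr (u - v) (w - u) = 0 \<Longrightarrow> cr (u - v) (w - v) = 0"
  by (simp_all add: cr_def algebra_simps)

lemma miq:
  fixes a b c x y z :: "real^2"
  assumes oa: "cr b c \<noteq> 0" "cr c a \<noteq> 0" "cr a b \<noteq> 0"
    and xon: "cr (c - b) (x - b) = 0" and yon: "cr (a - c) (y - a) = 0" and zon: "cr (b - a) (z - a) = 0"
    and ca: "\<exists>ce. 2 * inner ce a = inner a a \<and> 2 * inner ce y = inner y y \<and> 2 * inner ce z = inner z z"
      "y \<noteq> a" "z \<noteq> a"
    and cb: "\<exists>ce. 2 * inner ce b = inner b b \<and> 2 * inner ce z = inner z z \<and> 2 * inner ce x = inner x x"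
      "z \<noteq> b" "x \<noteq> b"
  shows "\<exists>l. inner x (c - b) = l * cr b c \<and> inner y (a - c) = l * cr c a \<and> inner z (b - a) = l * cr a b"
proof -
  obtain ce where ce: "2 * inner ce a = inner a a" "2 * inner ce y = inner y y" "2 * inner ce z = inner z z"
    using ca(1) by blast
  have "2 *\<^sub>R ce = a + (inner y (a - c) / cr a (a - c)) *\<^sub>R rot a"
    by (rule circ[OF ce(1) ce(2) yon ca(2)]) (simp add: crsimps oa)
  moreover have "2 *\<^sub>R ce = a + (inner z (b - a) / cr a (b - a)) *\<^sub>R rot a"
    by (rule circ[OF ce(1) ce(3) zon ca(3)]) (simp add: crsimps oa)
  ultimately have e1: "inner y (a - c) / cr c a = inner z (b - a) / cr a b"
    using scal_eq cr0(1)[OF oa(3)] by (metis crsimps(1,2))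
  obtain cf where cf: "2 * inner cf b = inner b b" "2 * inner cf z = inner z z" "2 * inner cf x = inner x x"
    using cb(1) by blast
  have "2 *\<^sub>R cf = b + (inner z (b - a) / cr b (b - a)) *\<^sub>R rot b"
    by (rule circ[OF cf(1) cf(2) online_shift(1)[OF zon] cb(2)]) (simp add: crsimps oa)
  moreover have "2 *\<^sub>R cf = b + (inner x (c - b) / cr b (c - b)) *\<^sub>R rot b"
    by (rule circ[OF cf(1) cf(3) xon cb(3)]) (simp add: crsimps oa)
  ultimately have e2: "inner z (b - a) / cr a b = inner x (c - b) / cr b c"
    using scal_eq cr0(1)[OF oa(1)] by (metis crsimps(3,4))
  show ?thesis using e1 e2 oa
    by (intro exI[of _ "inner x (c - b) / cr b c"]) (simp add: field_simps)
qed
lemma perp_par0: assumes "cr d v = 0" "inner v d = 0" "d \<noteq> 0" shows "v = (0::real^2)"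
proof -
  have "v$1 * (d$1^2 + d$2^2) = 0" "v$2 * (d$1^2 + d$2^2) = 0"
    using assms(1,2) unfolding inner2 cr_def by algebra+
  moreover have "d$1^2 + d$2^2 \<noteq> 0" using assms(3) by (auto simp: eq2)
  ultimately show ?thesis unfolding eq2 by (metis mult_eq_0_iff zero_index)
qed

lemma pedal:
  assumes "cr q d \<noteq> 0" "cr d (F - q) = 0" "inner F d = 0" "cr d (x - q) = 0" "inner x d = l * cr q d"
  shows "x = F + l *\<^sub>R rot F"
proof -
  have "d \<noteq> 0" using assms(1) by (auto simp: cr_def)
  have "x - (F + l *\<^sub>R rot F) = 0"
  proof (rule perp_par0[OF _ _ \<open>d \<noteq> 0\<close>])
    show "cr d (x - (F + l *\<^sub>R rot F)) = 0" using assms(2,3,4) unfolding cr_def inner2 by simp algebra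
    show "inner (x - (F + l *\<^sub>R rot F)) d = 0" using assms(2,3,5) unfolding cr_def inner2 by simp algebra
  qed
  thus ?thesis by simp
qed

abbreviation M where "M l F \<equiv> F + l *\<^sub>R rot F"

lemma M_cr: "cr (M l F) (M l G) = (1 + l^2) * cr F G" unfolding cr_def by simp algebra
lemma M_norm: "norm (M l G - M l F) ^2 = (1 + l^2) * norm (G - F) ^2" unfolding norm2 by simp algebra

lemma case1:
  fixes a b c x y z :: "real^2"
  assumes "cr b c \<noteq> 0" "cr c a \<noteq> 0" "cr a b \<noteq> 0"
    and xon: "cr (c - b) (x - b) = 0" and yon: "cr (a - c) (y - c) = 0" and zon: "cr (b - a) (z - a) = 0"
    and lx: "inner x (c - b) = l * cr b c" and ly: "inner y (a - c) = l * cr c a" and lz: "inner z (b - a) = l * cr a b"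
    and r1: "inner a a = inner b b" and r2: "inner a a = inner c c"
  shows "inner (-x) (z - y) = 0 \<and> inner (-y) (x - z) = 0 \<and> inner (-z) (y - x) = 0"
proof -
  have x: "x = M l ((1/2) *\<^sub>R (b + c))"
  proof (rule pedal[of b "c - b"])
    show "cr (c - b) ((1/2) *\<^sub>R (b + c) - b) = 0" unfolding cr_def by (simp add: field_simps)
    show "inner ((1/2) *\<^sub>R (b + c)) (c - b) = 0" using r1 r2 unfolding inner2 by (simp add: field_simps; algebra)
  qed (use assms in \<open>simp_all add: crsimps\<close>)
  have y: "y = M l ((1/2) *\<^sub>R (c + a))"
  proof (rule pedal[of c "a - c"])
    show "cr (a - c) ((1/2) *\<^sub>R (c + a) - c) = 0" unfolding cr_def by (simp add: field_simps)
    show "inner ((1/2) *\<^sub>R (c + a)) (a - c) = 0" using r1 r2 unfolding inner2 by (simp add: field_simps; algebra)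
  qed (use assms in \<open>simp_all add: crsimps\<close>)
  have z: "z = M l ((1/2) *\<^sub>R (a + b))"
  proof (rule pedal[of a "b - a"])
    show "cr (b - a) ((1/2) *\<^sub>R (a + b) - a) = 0" unfolding cr_def by (simp add: field_simps)
    show "inner ((1/2) *\<^sub>R (a + b)) (b - a) = 0" using r1 r2 unfolding inner2 by (simp add: field_simps; algebra)
  qed (use assms in \<open>simp_all add: crsimps\<close>)
  have "inner (-x) (z - y) = 0" using r1 r2 unfolding x y z inner2 by (simp add: field_simps; algebra)
  moreover have "inner (-y) (x - z) = 0" using r1 r2 unfolding x y z inner2 by (simp add: field_simps; algebra)
  moreover have "inner (-z) (y - x) = 0" using r1 r2 unfolding x y z inner2 by (simp add: field_simps; algebra)
  ultimately show ?thesis by blast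
qed
lemma real_comb:
  fixes L q u v w CR N S :: real
  assumes "v \<noteq> 0" "w \<noteq> 0" "N * (v * w) = S" "CR^2 * u = S"
  shows "(L * (q * q / (v * w) * CR))^2 * (u * v * w) = L * q^4 * (L * N)"
proof -
  have N: "N = S / (v * w)" using assms by (simp add: field_simps)
  have "(L * (q * q / (v * w) * CR))^2 * (u * v * w) = L^2 * q^4 * (CR^2 * u) / (v * w)"
    using assms(1,2) by (simp add: field_simps power2_eq_square eval_nat_numeral)
  also have "\<dots> = L * q^4 * (L * N)" using assms(4) unfolding N by (simp add: power2_eq_square)
  finally show ?thesis .
qed

lemma side:
  fixes a b c :: "real^2"
  assumes q: "inner a b = q" "inner b c = q" "inner c a = q" and nz: "b \<noteq> 0" "c \<noteq> 0"
  shows "(cr (M l ((q / inner b b) *\<^sub>R b)) (M l ((q / inner c c) *\<^sub>R c)))^2 * (inner a a * inner b b * inner c c)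
     = (1 + l^2) * q^4 * norm (M l ((q / inner c c) *\<^sub>R c) - M l ((q / inner b b) *\<^sub>R b))^2"
proof -
  have v: "inner b b \<noteq> 0" "inner c c \<noteq> 0" using nz by auto
  have cr1: "cr ((q / inner b b) *\<^sub>R b) ((q / inner c c) *\<^sub>R c) = q * q / (inner b b * inner c c) * cr b c"
    using v by (simp add: cr_def field_simps)
  have nn: "norm ((q / inner c c) *\<^sub>R c - (q / inner b b) *\<^sub>R b)^2 * (inner b b * inner c c)
      = q^2 * (inner b b + inner c c - 2 * q)"
    using v q(2) unfolding power2_norm_eq_inner
    by (simp add: inner_diff_left inner_diff_right inner_commute field_simps power2_eq_square)
  have l1: "(cr b c)^2 = inner b b * inner c c - (inner b c)^2"
    unfolding cr_def inner2 by algebra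
  have g: "inner a a * inner b b * inner c c + 2 * inner a b * inner b c * inner c a
     - inner a a * (inner b c)^2 - inner b b * (inner c a)^2 - inner c c * (inner a b)^2 = 0"
    unfolding inner2 by algebra
  have gram: "(cr b c)^2 * inner a a = q^2 * (inner b b + inner c c - 2 * q)"
    using g unfolding l1 q by algebra
  show ?thesis unfolding M_cr M_norm cr1
    by (rule real_comb[OF v nn gram])
qed
lemma foot_lemma:
  fixes p s t :: "real^2"
  assumes "inner p s = q" "inner p t = q" "p \<noteq> 0"
  shows "cr (t - s) ((q / inner p p) *\<^sub>R p - s) = 0" "inner ((q / inner p p) *\<^sub>R p) (t - s) = 0"
proof -
  have u: "inner p p \<noteq> 0" using assms(3) by simp
  have "inner p p * cr (t - s) ((q / inner p p) *\<^sub>R p - s) = q * cr (t - s) p - inner p p * cr (t - s) s"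
    using u by (simp add: cr_def field_simps)
  also have "\<dots> = (q - inner p s) * cr (t - s) p - cr p s * ((inner p t - q) - (inner p s - q))"
    unfolding cr_def inner2 vector_minus_component by algebra
  also have "\<dots> = 0" using assms(1,2) by simp
  finally show "cr (t - s) ((q / inner p p) *\<^sub>R p - s) = 0" using u by simp
  show "inner ((q / inner p p) *\<^sub>R p) (t - s) = 0" using assms(1,2) by (simp add: inner_diff_right)
qed

lemma case2:
  fixes a b c x y z :: "real^2"
  assumes nz: "cr b c \<noteq> 0" "cr c a \<noteq> 0" "cr a b \<noteq> 0"
    and xon: "cr (c - b) (x - b) = 0" and yon: "cr (a - c) (y - c) = 0" and zon: "cr (b - a) (z - a) = 0"
    and lx: "inner x (c - b) = l * cr b c" and ly: "inner y (a - c) = l * cr c a" and lz: "inner z (b - a) = l * cr a b"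
    and q: "inner a b = q" "inner b c = q" "inner c a = q"
  shows "x = M l ((q / inner a a) *\<^sub>R a)" "y = M l ((q / inner b b) *\<^sub>R b)" "z = M l ((q / inner c c) *\<^sub>R c)"
proof -
  have ne: "a \<noteq> 0" "b \<noteq> 0" "c \<noteq> 0" using nz by (auto simp: cr_def)
  have q': "inner a c = q" "inner b a = q" "inner c b = q" using q by (simp_all add: inner_commute)
  show "x = M l ((q / inner a a) *\<^sub>R a)"
    by (rule pedal[of b "c - b"]) (use assms foot_lemma[OF q(1) q'(1) ne(1)] in \<open>simp_all add: crsimps\<close>)
  show "y = M l ((q / inner b b) *\<^sub>R b)"
    by (rule pedal[of c "a - c"]) (use assms foot_lemma[OF q(2) q'(2) ne(2)] in \<open>simp_all add: crsimps\<close>)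
  show "z = M l ((q / inner c c) *\<^sub>R c)"
    by (rule pedal[of a "b - a"]) (use assms foot_lemma[OF q(3) q'(3) ne(3)] in \<open>simp_all add: crsimps\<close>)
qed

lemma case3:
  fixes b c x :: "real^2"
  assumes "cr (c - b) (x - b) = 0" "inner x (c - b) = l * cr b c" "b \<noteq> c"
  shows "norm x ^2 = (1 + l^2) * (\<bar>cr b c\<bar> / norm (c - b))^2"
proof -
  have n: "norm (c - b) \<noteq> 0" using assms(3) by simp
  have "cr (c - b) x = - cr b c" using assms(1) by (simp add: cr_def algebra_simps)
  with lagr[of x "c - b"] assms(2) have "norm x ^2 * norm (c - b)^2 = (1 + l^2) * (cr b c)^2"
    by (simp add: algebra_simps power2_eq_square)
  thus ?thesis using n by (simp add: field_simps power_divide)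
qed
lemma L1: "X \<in> line B C \<longleftrightarrow> cr ((C - P) - (B - P)) ((X - P) - (B - P)) = 0"
  unfolding line_def coll2 by simp
lemma L2: "P \<notin> line B C \<longleftrightarrow> cr (B - P) (C - P) \<noteq> 0"
  unfolding line_def coll2 by (simp add: cr_def algebra_simps)
lemma L3: "P \<notin> line B C \<Longrightarrow> infdist P (line B C) = \<bar>cr (B - P) (C - P)\<bar> / norm ((C - P) - (B - P))"
proof -
  assume h: "P \<notin> line B C"
  hence "B \<noteq> C" unfolding line_def by auto
  hence "infdist P (line B C) = \<bar>cr (C - B) (P - B)\<bar> / norm (C - B)" by (rule infdist_line)
  moreover have "cr (C - B) (P - B) = cr (B - P) (C - P)" by (simp add: cr_def algebra_simps)
  ultimately show ?thesis by simp
qed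
lemma L4: "dist P A = norm (A - P)" by (simp add: dist_norm norm_minus_commute)
lemma L5: "orthogonal (P - A) (C - B) \<longleftrightarrow> inner (A - P) ((C - P) - (B - P)) = 0"
proof -
  have "P - A = - (A - P)" by simp
  thus ?thesis unfolding orthogonal_def by (simp only: inner_minus_left) simp
qed
lemma distc: "dist c U = dist c P \<Longrightarrow> 2 * inner (c - P) (U - P) = inner (U - P) (U - P)"
proof -
  assume "dist c U = dist c P"
  hence "norm ((c - P) - (U - P)) ^2 = norm (c - P) ^2" by (simp add: dist_norm)
  thus ?thesis unfolding power2_norm_eq_inner by (simp add: inner_diff_left inner_diff_right inner_commute)
qed
lemma L6: "on_circle_through P U V W \<Longrightarrow> U \<noteq> V \<and> U \<noteq> W \<and> (\<exists>ce. 2 * inner ce (U - P) = inner (U - P) (U - P)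
   \<and> 2 * inner ce (V - P) = inner (V - P) (V - P) \<and> 2 * inner ce (W - P) = inner (W - P) (W - P))"
  unfolding on_circle_through_def
proof (elim conjE exE)
  fix c assume nc: "\<not> collinear {U, V, W}" and h: "dist c U = dist c V" "dist c U = dist c W" "dist c U = dist c P"
  have "U \<noteq> V" "U \<noteq> W" using nc by (auto simp: collinear_2 insert_commute)
  moreover have "2 * inner (c - P) (U - P) = inner (U - P) (U - P)" using h by (intro distc) simp
  moreover have "2 * inner (c - P) (V - P) = inner (V - P) (V - P)" using h by (intro distc) simp
  moreover have "2 * inner (c - P) (W - P) = inner (W - P) (W - P)" using h by (intro distc) simp
  ultimately show ?thesis by blast
qed
lemma sqrt_char: "D \<ge> 0 \<Longrightarrow> n \<noteq> 0 \<Longrightarrow> Cr^2 * U = L * n^2 \<Longrightarrow> U \<noteq> 0 \<Longrightarrow> D = \<bar>Cr\<bar> / n \<Longrightarrow> n > 0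
   \<Longrightarrow> D = sqrt (L / U)"
proof -
  assume h: "D \<ge> 0" "n \<noteq> 0" "Cr^2 * U = L * n^2" "U \<noteq> 0" "D = \<bar>Cr\<bar> / n" "n > 0"
  have "D^2 = Cr^2 / n^2" using h(5) by (simp add: power_divide)
  also have "\<dots> = L / U" using h(2,3,4) by (simp add: field_simps)
  finally have "D^2 = L / U" .
  thus ?thesis using h(1) by (metis real_sqrt_abs abs_of_nonneg)
qed

lemma step:
  assumes mq: "miquel_triangle P A B C X Y Z"
    and off': "P \<notin> line Y Z" "P \<notin> line Z X" "P \<notin> line X Y"
  shows "(circumcenter P A B C \<longrightarrow> orthocenter P X Y Z) \<and> (orthocenter P A B C \<longrightarrow> in_or_excenter P X Y Z)
     \<and> (in_or_excenter P A B C \<longrightarrow> circumcenter P X Y Z)"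
proof -
  define a where "a = A - P"
  define b where "b = B - P"
  define c where "c = C - P"
  define x where "x = X - P"
  define y where "y = Y - P"
  define z where "z = Z - P"
  note defs = a_def b_def c_def x_def y_def z_def
  note m = mq[unfolded miquel_triangle_def]
  have nz: "cr b c \<noteq> 0" "cr c a \<noteq> 0" "cr a b \<noteq> 0" using m unfolding L2 defs by auto
  have nz': "cr y z \<noteq> 0" "cr z x \<noteq> 0" "cr x y \<noteq> 0" using off' unfolding L2 defs by auto
  have xon: "cr (c - b) (x - b) = 0" using m unfolding defs L1[where P=P] by auto
  have yon: "cr (a - c) (y - c) = 0" using m unfolding defs L1[where P=P] by auto
  have zon: "cr (b - a) (z - a) = 0" using m unfolding defs L1[where P=P] by auto
  have ca: "\<exists>ce. 2 * inner ce a = inner a a \<and> 2 * inner ce y = inner y y \<and> 2 * inner ce z = inner z z" "y \<noteq> a" "z \<noteq> a"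
    using L6[of P A Y Z] m unfolding defs by auto
  have cb: "\<exists>ce. 2 * inner ce b = inner b b \<and> 2 * inner ce z = inner z z \<and> 2 * inner ce x = inner x x" "z \<noteq> b" "x \<noteq> b"
    using L6[of P B Z X] m unfolding defs by auto
  obtain l where lx: "inner x (c - b) = l * cr b c" and ly: "inner y (a - c) = l * cr c a"
      and lz: "inner z (b - a) = l * cr a b"
    using miq[OF nz xon online_shift(1)[OF yon] zon ca cb] by blast
  have P1: "circumcenter P A B C \<longrightarrow> orthocenter P X Y Z"
  proof
    assume "circumcenter P A B C"
    hence "norm a = norm b" "norm a = norm c" unfolding circumcenter_def L4 defs by auto
    hence r: "inner a a = inner b b" "inner a a = inner c c" by (simp_all add: dot_square_norm)
    have "inner (-x) (z - y) = 0 \<and> inner (-y) (x - z) = 0 \<and> inner (-z) (y - x) = 0"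
      by (rule case1[OF nz xon yon zon lx ly lz r])
    thus "orthocenter P X Y Z" unfolding orthocenter_def L5[where P=P] defs[symmetric] by simp
  qed
  have P2: "orthocenter P A B C \<longrightarrow> in_or_excenter P X Y Z"
  proof
    assume "orthocenter P A B C"
    hence o: "inner a (c - b) = 0" "inner b (a - c) = 0" "inner c (b - a) = 0"
      unfolding orthocenter_def L5[where P=P] defs[symmetric] by auto
    define q where "q = inner a b"
    have q: "inner a b = q" "inner b c = q" "inner c a = q"
      using o unfolding q_def by (auto simp: inner_diff_right inner_commute)
    note xyz = case2[OF nz xon yon zon lx ly lz q]
    have ne: "inner a a \<noteq> 0" "inner b b \<noteq> 0" "inner c c \<noteq> 0" using nz by (auto simp: cr_def)
    have nz0: "a \<noteq> 0" "b \<noteq> 0" "c \<noteq> 0" using nz by (auto simp: cr_def)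
    note xyzs = xyz[symmetric]
    define K where "K = ((1 + l^2) * q^4) / (inner a a * inner b b * inner c c)"
    have d1: "infdist P (line Y Z) = sqrt K"
    proof -
      have e: "infdist P (line Y Z) = \<bar>cr y z\<bar> / norm (z - y)" using L3[OF off'(1)] unfolding defs by simp
      have n: "norm (z - y) \<noteq> 0" using nz'(1) by (auto simp: cr_def)
      have n': "z \<noteq> y" using nz'(1) by (auto simp: cr_def)
      show ?thesis unfolding K_def
        by (rule sqrt_char[OF infdist_nonneg n _ _ e]) (use side[OF q nz0(2,3), of l] ne n' in \<open>simp_all only: xyzs, simp_all add: mult_ac\<close>)
    qed
    have d2: "infdist P (line Z X) = sqrt K"
    proof -
      have e: "infdist P (line Z X) = \<bar>cr z x\<bar> / norm (x - z)" using L3[OF off'(2)] unfolding defs by simp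
      have n: "norm (x - z) \<noteq> 0" using nz'(2) by (auto simp: cr_def)
      have n': "x \<noteq> z" using nz'(2) by (auto simp: cr_def)
      show ?thesis unfolding K_def
        by (rule sqrt_char[OF infdist_nonneg n _ _ e]) (use side[OF q(2,3,1) nz0(3,1), of l] ne n' in \<open>simp_all only: xyzs, simp_all add: mult_ac\<close>)
    qed
    have d3: "infdist P (line X Y) = sqrt K"
    proof -
      have e: "infdist P (line X Y) = \<bar>cr x y\<bar> / norm (y - x)" using L3[OF off'(3)] unfolding defs by simp
      have n: "norm (y - x) \<noteq> 0" using nz'(3) by (auto simp: cr_def)
      have n': "y \<noteq> x" using nz'(3) by (auto simp: cr_def)
      show ?thesis unfolding K_def
        by (rule sqrt_char[OF infdist_nonneg n _ _ e]) (use side[OF q(3,1,2) nz0(1,2), of l] ne n' in \<open>simp_all only: xyzs, simp_all add: mult_ac\<close>)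
    qed
    have "infdist P (line Y Z) > 0"
    proof -
      have "infdist P (line Y Z) = \<bar>cr y z\<bar> / norm (z - y)" using L3[OF off'(1)] unfolding defs by simp
      moreover have "norm (z - y) > 0" using nz'(1) by (auto simp: cr_def)
      ultimately show ?thesis using nz'(1) by simp
    qed
    thus "in_or_excenter P X Y Z" unfolding in_or_excenter_def using d1 d2 d3 by auto
  qed
  have P3: "in_or_excenter P A B C \<longrightarrow> circumcenter P X Y Z"
  proof
    assume "in_or_excenter P A B C"
    then obtain r where r: "infdist P (line B C) = r" "infdist P (line C A) = r" "infdist P (line A B) = r"
      unfolding in_or_excenter_def by auto
    have r': "\<bar>cr b c\<bar> / norm (c - b) = r" "\<bar>cr c a\<bar> / norm (a - c) = r" "\<bar>cr a b\<bar> / norm (b - a) = r"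
      using r L3[of P B C] L3[of P C A] L3[of P A B] m unfolding defs by auto
    have ne: "b \<noteq> c" "c \<noteq> a" "a \<noteq> b" using nz by (auto simp: cr_def)
    have "norm x ^2 = (1 + l^2) * r^2" using case3[OF xon lx ne(1)] r'(1) by simp
    moreover have "norm y ^2 = (1 + l^2) * r^2" using case3[OF yon ly ne(2)] r'(2) by simp
    moreover have "norm z ^2 = (1 + l^2) * r^2" using case3[OF zon lz ne(3)] r'(3) by simp
    ultimately have "norm x = norm y" "norm x = norm z" by (metis norm_ge_zero power2_eq_iff_nonneg)+
    thus "circumcenter P X Y Z" unfolding circumcenter_def L4 defs by simp
  qed
  show ?thesis using P1 P2 P3 by blast
qed

theorem corollary4:
  fixes P :: point and A B C :: "nat \<Rightarrow> point"
  assumes chain: "\<And>k. miquel_triangle P (A k) (B k) (C k) (A (Suc k)) (B (Suc k)) (C (Suc k))"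
    and nondeg: "\<And>k. nondegenerate (A k) (B k) (C k)"
    and not_right: "\<And>k. \<not> right_angled (A k) (B k) (C k)"
    and off_lines: "\<And>k. P \<notin> line (B k) (C k) \<and> P \<notin> line (C k) (A k) \<and> P \<notin> line (A k) (B k)"
  shows "(\<forall>k. circumcenter P (A k) (B k) (C k) \<longrightarrow> orthocenter P (A (Suc k)) (B (Suc k)) (C (Suc k)))
       \<and> (\<forall>k. orthocenter P (A k) (B k) (C k) \<longrightarrow> in_or_excenter P (A (Suc k)) (B (Suc k)) (C (Suc k)))
       \<and> (\<forall>k. in_or_excenter P (A k) (B k) (C k) \<longrightarrow> circumcenter P (A (Suc k)) (B (Suc k)) (C (Suc k)))
       \<and> (circumcenter P (A 0) (B 0) (C 0) \<longrightarrow>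
           (\<forall>m. circumcenter P (A (3*m)) (B (3*m)) (C (3*m))
              \<and> orthocenter P (A (3*m+1)) (B (3*m+1)) (C (3*m+1))
              \<and> in_or_excenter P (A (3*m+2)) (B (3*m+2)) (C (3*m+2))))"
proof -
  have st: "(circumcenter P (A k) (B k) (C k) \<longrightarrow> orthocenter P (A (Suc k)) (B (Suc k)) (C (Suc k)))
       \<and> (orthocenter P (A k) (B k) (C k) \<longrightarrow> in_or_excenter P (A (Suc k)) (B (Suc k)) (C (Suc k)))
       \<and> (in_or_excenter P (A k) (B k) (C k) \<longrightarrow> circumcenter P (A (Suc k)) (B (Suc k)) (C (Suc k)))" for k
    using step[OF chain] off_lines[of "Suc k"] by blast
  have c3: "circumcenter P (A (3*m)) (B (3*m)) (C (3*m))" if h0: "circumcenter P (A 0) (B 0) (C 0)" for m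
  proof (induction m)
    case 0 then show ?case using h0 by simp
  next
    case (Suc m)
    hence "orthocenter P (A (Suc (3*m))) (B (Suc (3*m))) (C (Suc (3*m)))" using st by blast
    hence "in_or_excenter P (A (Suc (Suc (3*m)))) (B (Suc (Suc (3*m)))) (C (Suc (Suc (3*m))))" using st by blast
    hence "circumcenter P (A (Suc (Suc (Suc (3*m))))) (B (Suc (Suc (Suc (3*m))))) (C (Suc (Suc (Suc (3*m)))))"
      using st by blast
    moreover have "Suc (Suc (Suc (3*m))) = 3 * Suc m" by simp
    ultimately show ?case by simp
  qed
  have p4: "circumcenter P (A 0) (B 0) (C 0) \<longrightarrow>
           (\<forall>m. circumcenter P (A (3*m)) (B (3*m)) (C (3*m))
              \<and> orthocenter P (A (3*m+1)) (B (3*m+1)) (C (3*m+1))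
              \<and> in_or_excenter P (A (3*m+2)) (B (3*m+2)) (C (3*m+2)))"
  proof (intro impI allI)
    fix m assume h0: "circumcenter P (A 0) (B 0) (C 0)"
    have a: "circumcenter P (A (3*m)) (B (3*m)) (C (3*m))" by (rule c3[OF h0])
    hence b: "orthocenter P (A (3*m+1)) (B (3*m+1)) (C (3*m+1))" using st[of "3*m"] by simp
    hence "in_or_excenter P (A (3*m+2)) (B (3*m+2)) (C (3*m+2))" using st[of "3*m+1"]
      by (simp add: numeral_2_eq_2)
    with a b show "circumcenter P (A (3*m)) (B (3*m)) (C (3*m))
              \<and> orthocenter P (A (3*m+1)) (B (3*m+1)) (C (3*m+1))
              \<and> in_or_excenter P (A (3*m+2)) (B (3*m+2)) (C (3*m+2))" by blast
  qed
  show ?thesis using st p4 by blast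
qed

end
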